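(* Let $(X,G)$ be a $G$-system with metric $d$ of diameter $\rho$, and let $\zeta\in\mathcal A[0,\rho]$ satisfy $k(\zeta):=k_m(\zeta)=k_M(\zeta)>0$. With $\zeta_d(x,y)=\zeta(d(x,y))$, $$\overline{\mathrm{mdim}}_{\mathrm M}(X,G,d)=k(\zeta)\,\overline{\mathrm{mdim}}_{\mathrm M}(X,G,\zeta_d),\qquad\underline{\mathrm{mdim}}_{\mathrm M}(X,G,d)=k(\zeta)\,\underline{\mathrm{mdim}}_{\mathrm M}(X,G,\zeta_d).$$
   Context: $G$ is a countable discrete amenable group; a $G$-system is a compact metric space with a continuous $G$-action. $\mathcal A[0,\rho]$ is the set of continuous, increasing, subadditive functions $\zeta:[0,\rho]\to[0,\infty)$ with $\zeta^{-1}(0)=\{0\}$; $k_m(\zeta)=\liminf_{\varepsilon\to0^+}\frac{\log\zeta(\varepsilon)}{\log\varepsilon}$, $k_M(\zeta)=\limsup_{\varepsilon\to0^+}\frac{\log\zeta(\varepsilon)}{\log\varepsilon}$. For a Følner sequence $(F_n)$ and metric $\rho'$, $\rho'_F(x,y)=\max_{g\in F}\rho'(gx,gy)$, $s_F(\rho',\varepsilon,X)$ is the maximal cardinality of a subset whose distinct points have $\rho'_F$-distance $>\varepsilon$; $\overline{\mathrm{mdim}}_{\mathrm M}(X,G,\rho')=\limsup_{\varepsilon\to0}\frac1{|\log\varepsilon|}\limsup_n\frac1{|F_n|}\log s_{F_n}(\rho',\varepsilon,X)$ and $\underline{\mathrm{mdim}}_{\mathrm M}$ the same with $\liminf_{\varepsilon\to0}$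 (equivalently with minimal spanning-set cardinalities; independent of the Følner sequence). *)

theory Defs
  imports "HOL-Analysis.Analysis"
begin

text \<open>A G-action of the (multiplicatively thought, additively written) group 'g on 'a.\<close>
definition group_action :: "('g::group_add \<Rightarrow> 'a \<Rightarrow> 'a) \<Rightarrow> bool" where
  "group_action T \<longleftrightarrow> (\<forall>x. T 0 x = x) \<and> (\<forall>g h x. T (g + h) x = T g (T h x))"

definition folner_seq :: "(nat \<Rightarrow> 'g::group_add set) \<Rightarrow> bool" where
  "folner_seq F \<longleftrightarrow> (\<forall>n. finite (F n) \<and> F n \<noteq> {}) \<and>
     (\<forall>g. (\<lambda>n. real (card (((\<lambda>h. g + h) ` F n) - F n \<union> (F n - (\<lambda>h. g + h) ` F n)))
                 / real (card (F n))) \<longlonglongrightarrow> 0)"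

definition amenable_group :: "'g::group_add itself \<Rightarrow> bool" where
  "amenable_group _ \<longleftrightarrow> (\<exists>F::nat \<Rightarrow> 'g set. folner_seq F)"

definition bowen :: "('g \<Rightarrow> 'a \<Rightarrow> 'a) \<Rightarrow> ('a \<Rightarrow> 'a \<Rightarrow> real) \<Rightarrow> 'g set \<Rightarrow> 'a \<Rightarrow> 'a \<Rightarrow> real" where
  "bowen T r F x y = Max ((\<lambda>g. r (T g x) (T g y)) ` F)"

text \<open>s_F(\<rho>',\<epsilon>,X), X = UNIV: maximal cardinality of an \<epsilon>-separated set.\<close>
definition sep_num :: "('g \<Rightarrow> 'a \<Rightarrow> 'a) \<Rightarrow> ('a \<Rightarrow> 'a \<Rightarrow> real) \<Rightarrow> 'g set \<Rightarrow> real \<Rightarrow> nat" where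
  "sep_num T r F \<epsilon> = Sup {card E | E. finite E \<and>
      (\<forall>x\<in>E. \<forall>y\<in>E. x \<noteq> y \<longrightarrow> bowen T r F x y > \<epsilon>)}"

definition upper_mdimM :: "('g \<Rightarrow> 'a \<Rightarrow> 'a) \<Rightarrow> (nat \<Rightarrow> 'g set) \<Rightarrow> ('a \<Rightarrow> 'a \<Rightarrow> real) \<Rightarrow> ereal" where
  "upper_mdimM T F r = Limsup (at_right 0) (\<lambda>\<epsilon>.
      limsup (\<lambda>n. ereal (ln (real (sep_num T r (F n) \<epsilon>)) / real (card (F n))))
      * ereal (1 / \<bar>ln \<epsilon>\<bar>))"

definition lower_mdimM :: "('g \<Rightarrow> 'a \<Rightarrow> 'a) \<Rightarrow> (nat \<Rightarrow> 'g set) \<Rightarrow> ('a \<Rightarrow> 'a \<Rightarrow> real) \<Rightarrow> ereal" where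
  "lower_mdimM T F r = Liminf (at_right 0) (\<lambda>\<epsilon>.
      limsup (\<lambda>n. ereal (ln (real (sep_num T r (F n) \<epsilon>)) / real (card (F n))))
      * ereal (1 / \<bar>ln \<epsilon>\<bar>))"

definition class_A :: "real \<Rightarrow> (real \<Rightarrow> real) \<Rightarrow> bool" where
  "class_A \<rho> \<zeta> \<longleftrightarrow> continuous_on {0..\<rho>} \<zeta> \<and> mono_on {0..\<rho>} \<zeta>
     \<and> (\<forall>s t. 0 \<le> s \<and> 0 \<le> t \<and> s + t \<le> \<rho> \<longrightarrow> \<zeta> (s + t) \<le> \<zeta> s + \<zeta> t)
     \<and> (\<forall>t\<in>{0..\<rho>}. \<zeta> t \<ge> 0)
     \<and> {t\<in>{0..\<rho>}. \<zeta> t = 0} = {0}"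

definition k_m :: "(real \<Rightarrow> real) \<Rightarrow> ereal" where
  "k_m \<zeta> = Liminf (at_right 0) (\<lambda>\<epsilon>. ereal (ln (\<zeta> \<epsilon>) / ln \<epsilon>))"

definition k_M :: "(real \<Rightarrow> real) \<Rightarrow> ereal" where
  "k_M \<zeta> = Limsup (at_right 0) (\<lambda>\<epsilon>. ereal (ln (\<zeta> \<epsilon>) / ln \<epsilon>))"

end

theory Submission
  imports Defs
begin


lemma Limsup_filter_mono: "F \<le> G \<Longrightarrow> Limsup F f \<le> Limsup G f"
  unfolding Limsup_def
  by (rule INF_superset_mono) (auto simp: le_filter_def)

lemma Liminf_filter_mono: "F \<le> G \<Longrightarrow> Liminf G f \<le> Liminf F f"
  unfolding Liminf_def
  by (rule SUP_subset_mono) (auto simp: le_filter_def)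

lemma Limsup_compose_le:
  assumes "filterlim g G F"
  shows "Limsup F (\<lambda>x. f (g x)) \<le> Limsup G f"
  using Limsup_filtermap_ge[of F f g] Limsup_filter_mono[of "filtermap g F" G f] assms
  unfolding filterlim_def by (meson order_trans)

lemma Liminf_compose_ge:
  assumes "filterlim g G F"
  shows "Liminf G f \<le> Liminf F (\<lambda>x. f (g x))"
  using Liminf_filtermap_le[of g F f] Liminf_filter_mono[of "filtermap g F" G f] assms
  unfolding filterlim_def by (meson order_trans)

lemma ereal_eps_mult:
  fixes X Y :: ereal
  assumes "X \<ge> 0" "c > 0" "\<And>c'. c' > c \<Longrightarrow> Y \<le> X * ereal c'"
  shows "Y \<le> X * ereal c"
proof (cases X)
  case (real x)
  have Yle: "Y \<le> ereal (x * (c+1))" using assms(3)[of "c+1"] real by simp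
  then obtain y where y: "Y = ereal y \<or> Y = -\<infinity>" by (cases Y) auto
  show ?thesis
  proof (cases "Y = -\<infinity>")
    case True then show ?thesis by simp
  next
    case False
    then have Yy: "Y = ereal y" using y by auto
    have "y \<le> x * c"
    proof (rule field_le_epsilon)
      fix e :: real assume e: "e > 0"
      show "y \<le> x * c + e"
      proof (cases "x = 0")
        case True then show ?thesis using assms(3)[of "c+1"] real Yy e by simp
      next
        case False
        then have xp: "x > 0" using assms(1) real by simp
        have "y \<le> x * (c + e / x)" using assms(3)[of "c + e/x"] real Yy xp e by simp
        also have "\<dots> = x*c + e" using xp by (simp add: field_simps)
        finally show ?thesis .
      qed
    qed
    then show ?thesis using Yy real by simp
  qed
next
  case PInf then show ?thesis using assms by simp
next
  case MInf then show ?thesis using assms by simp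
qed

lemma transfer_LS:
  fixes u v :: "real \<Rightarrow> ereal" and \<phi> a :: "real \<Rightarrow> real" and c :: real
  assumes c: "c > 0"
    and phi: "filterlim \<phi> (at_right 0) (at_right 0)"
    and a: "(a \<longlongrightarrow> c) (at_right 0)"
    and vpos: "\<And>x. v x \<ge> 0"
    and ineq: "eventually (\<lambda>t. u t \<le> v (\<phi> t) * ereal (a t)) (at_right 0)"
  shows "Limsup (at_right 0) u \<le> Limsup (at_right 0) v * ereal c"
proof -
  have bot: "(at_right (0::real)) \<noteq> bot" by simp
  have ev: "eventually (\<lambda>t. u t \<le> v (\<phi> t) * ereal c') (at_right 0)" if "c' > c" for c'
  proof -
    have "eventually (\<lambda>t. a t < c') (at_right 0)" using a that order_tendstoD(2) by blast
    then show ?thesis using ineq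
    proof eventually_elim
      case (elim t)
      have "v (\<phi> t) * ereal (a t) \<le> v (\<phi> t) * ereal c'"
        using elim(1) vpos by (intro ereal_mult_left_mono) auto
      then show ?case using elim(2) by simp
    qed
  qed
  show ?thesis
  proof (rule ereal_eps_mult)
    have "0 \<le> Liminf (at_right 0) v" using vpos by (intro Liminf_bounded) auto
    then show "Limsup (at_right 0) v \<ge> 0"
      using Liminf_le_Limsup[OF bot, of v] by (rule order_trans)
    fix c' assume cc: "c' > c"
    have "Limsup (at_right 0) u \<le> Limsup (at_right 0) (\<lambda>t. v (\<phi> t) * ereal c')"
      using ev[OF cc] by (rule Limsup_mono)
    also have "\<dots> = Limsup (at_right 0) (\<lambda>t. v (\<phi> t)) * ereal c'"
      using bot cc c by (intro Limsup_ereal_mult_right) auto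
    also have "\<dots> \<le> Limsup (at_right 0) v * ereal c'"
      using Limsup_compose_le[OF phi, of v] cc c by (intro ereal_mult_right_mono) auto
    finally show "Limsup (at_right 0) u \<le> Limsup (at_right 0) v * ereal c'" .
  qed (use c in auto)
qed

lemma transfer_LI:
  fixes u v :: "real \<Rightarrow> ereal" and \<psi> b :: "real \<Rightarrow> real" and c :: real
  assumes c: "c > 0"
    and psi: "filterlim \<psi> (at_right 0) (at_right 0)"
    and b: "(b \<longlongrightarrow> c) (at_right 0)"
    and vpos: "\<And>x. v x \<ge> 0"
    and ineq: "eventually (\<lambda>e. u (\<psi> e) \<le> v e * ereal (b e)) (at_right 0)"
  shows "Liminf (at_right 0) u \<le> Liminf (at_right 0) v * ereal c"
proof -
  have bot: "(at_right (0::real)) \<noteq> bot" by simp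
  show ?thesis
  proof (rule ereal_eps_mult)
    show "Liminf (at_right 0) v \<ge> 0"
      using vpos by (intro Liminf_bounded) auto
    fix c' assume cc: "c' > c"
    have ev2: "eventually (\<lambda>e. u (\<psi> e) \<le> v e * ereal c') (at_right 0)"
    proof -
      have "eventually (\<lambda>e. b e < c') (at_right 0)" using b cc order_tendstoD(2) by blast
      then show ?thesis using ineq
      proof eventually_elim
        case (elim e)
        have "v e * ereal (b e) \<le> v e * ereal c'"
          using elim(1) vpos by (intro ereal_mult_left_mono) auto
        then show ?case using elim(2) by simp
      qed
    qed
    have "Liminf (at_right 0) u \<le> Liminf (at_right 0) (\<lambda>e. u (\<psi> e))"
      by (rule Liminf_compose_ge[OF psi])
    also have "\<dots> \<le> Liminf (at_right 0) (\<lambda>e. v e * ereal c')"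
      using ev2 by (rule Liminf_mono)
    also have "\<dots> = Liminf (at_right 0) v * ereal c'"
      using bot cc c by (intro Liminf_ereal_mult_right) auto
    finally show "Liminf (at_right 0) u \<le> Liminf (at_right 0) v * ereal c'" .
  qed (use c in auto)
qed



definition sepset :: "('g \<Rightarrow> 'a \<Rightarrow> 'a) \<Rightarrow> ('a \<Rightarrow> 'a \<Rightarrow> real) \<Rightarrow> 'g set \<Rightarrow> real \<Rightarrow> nat set" where
  "sepset T r F e = {card E | E. finite E \<and> (\<forall>x\<in>E. \<forall>y\<in>E. x \<noteq> y \<longrightarrow> bowen T r F x y > e)}"

lemma sep_num_sepset: "sep_num T r F e = Sup (sepset T r F e)"
  unfolding sep_num_def sepset_def by simp

lemma bowen_gt:
  assumes "finite F" "F \<noteq> {}"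
  shows "bowen T r F x y > e \<longleftrightarrow> (\<exists>g\<in>F. r (T g x) (T g y) > e)"
  unfolding bowen_def using assms by (subst Max_gr_iff) auto

lemma sepset_mono:
  assumes F: "finite F" "F \<noteq> {}" and imp: "\<And>a b. r1 a b > e1 \<Longrightarrow> r2 a b > e2"
  shows "sepset T r1 F e1 \<subseteq> sepset T r2 F e2"
proof
  fix n assume "n \<in> sepset T r1 F e1"
  then obtain E where E: "n = card E" "finite E"
      "\<forall>x\<in>E. \<forall>y\<in>E. x \<noteq> y \<longrightarrow> bowen T r1 F x y > e1"
    unfolding sepset_def by auto
  have "\<forall>x\<in>E. \<forall>y\<in>E. x \<noteq> y \<longrightarrow> bowen T r2 F x y > e2"
  proof (intro ballI impI)
    fix x y assume "x \<in> E" "y \<in> E" "x \<noteq> y"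
    then have "bowen T r1 F x y > e1" using E(3) by simp
    then obtain g where g: "g \<in> F" "r1 (T g x) (T g y) > e1"
      unfolding bowen_gt[OF F] by auto
    have "r2 (T g x) (T g y) > e2" using imp[OF g(2)] .
    then show "bowen T r2 F x y > e2" unfolding bowen_gt[OF F] using g(1) by auto
  qed
  then show "n \<in> sepset T r2 F e2" unfolding sepset_def using E(1,2) by auto
qed

lemma sepset_dist_bdd:
  fixes T :: "'g \<Rightarrow> 'a::metric_space \<Rightarrow> 'a"
  assumes cpt: "compact (UNIV :: 'a set)" and cont: "\<And>g. continuous_on UNIV (T g)"
    and F: "finite F" "F \<noteq> {}" and d: "\<delta> > 0"
  shows "bdd_above (sepset T dist F \<delta>)"
proof -
  define U where "U = (\<lambda>c. \<Inter>g\<in>F. (T g) -` ball (T g c) (\<delta>/2))"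
  have opn: "open (U c)" for c
  proof -
    have "open (T g -` ball z r)" for g z r
      using iffD1[OF continuous_on_open_vimage[OF open_UNIV] cont] by simp
    then show ?thesis unfolding U_def using F(1) by (intro open_INT) auto
  qed
  have selfU: "x \<in> U x" for x unfolding U_def using d by simp
  have cov: "(UNIV::'a set) \<subseteq> (\<Union>c\<in>UNIV. U c)" using selfU by blast
  obtain K where K0: "K \<subseteq> UNIV" and K: "finite K" "(UNIV::'a set) \<subseteq> (\<Union>c\<in>K. U c)"
    by (rule compactE_image[OF cpt opn cov])
  have "n \<le> card K" if "n \<in> sepset T dist F \<delta>" for n
  proof -
    have "\<exists>E. n = card E \<and> finite E \<and> (\<forall>x\<in>E. \<forall>y\<in>E. x \<noteq> y \<longrightarrow> bowen T dist F x y > \<delta>)"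
      using that unfolding sepset_def mem_Collect_eq .
    then obtain E where E: "n = card E" "finite E"
      "\<forall>x\<in>E. \<forall>y\<in>E. x \<noteq> y \<longrightarrow> bowen T dist F x y > \<delta>"
      by blast
    define h where "h = (\<lambda>y. SOME c. c \<in> K \<and> y \<in> U c)"
    have h: "h y \<in> K \<and> y \<in> U (h y)" for y
      unfolding h_def by (rule someI_ex) (use K(2) in blast)
    have "inj_on h E"
    proof (rule inj_onI, rule ccontr)
      fix y z assume yz: "y \<in> E" "z \<in> E" "h y = h z" "y \<noteq> z"
      then obtain g where g: "g \<in> F" "dist (T g y) (T g z) > \<delta>"
        using E(3) unfolding bowen_gt[OF F] by auto
      have yU: "y \<in> U (h y)" using h[of y] by simp
      have zU: "z \<in> U (h y)" using h[of z] yz(3) by simp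
      have "y \<in> T g -` ball (T g (h y)) (\<delta>/2)" using yU g(1) unfolding U_def by (rule INT_D)
      moreover have "z \<in> T g -` ball (T g (h y)) (\<delta>/2)" using zU g(1) unfolding U_def by (rule INT_D)
      ultimately have d1: "dist (T g (h y)) (T g y) < \<delta>/2" and d2: "dist (T g (h y)) (T g z) < \<delta>/2"
        by (simp_all add: mem_ball)
      have "dist (T g y) (T g z) \<le> dist (T g y) (T g (h y)) + dist (T g (h y)) (T g z)"
        by (rule dist_triangle)
      also have "\<dots> = dist (T g (h y)) (T g y) + dist (T g (h y)) (T g z)"
        by (simp only: dist_commute[of "T g y"])
      finally have "dist (T g y) (T g z) < \<delta>" using d1 d2 by linarith
      then show False using g by simp
    qed
    moreover have "h ` E \<subseteq> K" using h by auto
    ultimately have "card E \<le> card K" by (rule card_inj_on_le[OF _ _ K(1)])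
    then show ?thesis using E(1) by simp
  qed
  then show ?thesis by (rule bdd_aboveI)
qed

lemma sep_num_le:
  assumes "finite F" "F \<noteq> {}" "\<And>a b. r1 a b > e1 \<Longrightarrow> r2 a b > e2"
    and "bdd_above (sepset T r2 F e2)"
  shows "sep_num T r1 F e1 \<le> sep_num T r2 F e2"
proof -
  have "0 \<in> sepset T r1 F e1" unfolding sepset_def by (auto intro!: exI[of _ "{}"])
  moreover have "sepset T r1 F e1 \<subseteq> sepset T r2 F e2"
    by (rule sepset_mono) (use assms in auto)
  ultimately show ?thesis unfolding sep_num_sepset
    using assms(4) by (intro cSup_subset_mono) auto
qed

lemma sep_num_le1:
  assumes "finite F" "F \<noteq> {}" "\<And>a b. \<not> r a b > e"
  shows "sep_num T r F e \<le> 1"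
proof -
  have "sepset T r F e \<subseteq> {0, 1}"
  proof
    fix n assume "n \<in> sepset T r F e"
    then obtain E where E: "n = card E" "finite E"
      "\<forall>x\<in>E. \<forall>y\<in>E. x \<noteq> y \<longrightarrow> bowen T r F x y > e"
      unfolding sepset_def by auto
    have "\<forall>x\<in>E. \<forall>y\<in>E. x = y"
    proof (intro ballI, rule ccontr)
      fix x y assume "x \<in> E" "y \<in> E" "x \<noteq> y"
      then have "bowen T r F x y > e" using E(3) by simp
      then obtain g where "r (T g x) (T g y) > e" unfolding bowen_gt[OF assms(1,2)] by auto
      then show False using assms(3) by simp
    qed
    then have "card E \<le> 1" using card_le_Suc0_iff_eq[OF E(2)] by auto
    then show "n \<in> {0,1}" using E(1) by auto
  qed
  moreover have "0 \<in> sepset T r F e" unfolding sepset_def by (auto intro!: exI[of _ "{}"])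
  ultimately show ?thesis unfolding sep_num_sepset
    by (intro cSup_least) auto
qed



lemma to_at_right:
  fixes f :: "'b \<Rightarrow> real"
  assumes "(f \<longlongrightarrow> 0) F" "eventually (\<lambda>x. f x > 0) F"
  shows "filterlim f (at_right 0) F"
  unfolding filterlim_at using assms(1) eventually_mono[OF assms(2)] by auto

lemma ln_nat_nonneg: "0 \<le> ln (real (n::nat))"
  by (cases "n = 0") auto

lemma ln_nat_mono: "(a::nat) \<le> b \<Longrightarrow> ln (real a) \<le> ln (real b)"
  by (cases "a = 0") (auto simp: ln_nat_nonneg)

lemma limsup_ln_mono:
  assumes "\<And>n. a n \<le> b n"
  shows "limsup (\<lambda>n. ereal (ln (real (a n)) / real (c n)))
       \<le> limsup (\<lambda>n. ereal (ln (real (b n)) / real (c n)))"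
  by (rule Limsup_mono, rule always_eventually) (auto intro!: divide_right_mono ln_nat_mono assms)

lemma limsup_ln_nonneg:
  "0 \<le> limsup (\<lambda>n. ereal (ln (real (a n)) / real (c n)))"
proof -
  have "0 \<le> liminf (\<lambda>n. ereal (ln (real (a n)) / real (c n)))"
    by (intro Liminf_bounded) (auto simp: ln_nat_nonneg)
  then show ?thesis by (rule order_trans) (rule Liminf_le_Limsup, simp)
qed

lemma ereal_cancel_k:
  assumes "k > 0" shows "ereal k * (X * ereal (1/k)) = X"
  using assms by (cases X) auto



theorem mainTheorem15:
  fixes T :: "'g::{group_add, countable} \<Rightarrow> 'a::metric_space \<Rightarrow> 'a"
    and F :: "nat \<Rightarrow> 'g set"
    and \<zeta> :: "real \<Rightarrow> real" and k :: real
  assumes "group_action T"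
    and "\<And>g. continuous_on UNIV (T g)"
    and "compact (UNIV :: 'a set)"
    and "amenable_group TYPE('g)"
    and "folner_seq F"
    and "class_A (diameter (UNIV :: 'a set)) \<zeta>"
    and "k_m \<zeta> = ereal k" and "k_M \<zeta> = ereal k" and "k > 0"
  shows "upper_mdimM T F (dist :: 'a \<Rightarrow> 'a \<Rightarrow> real)
           = ereal k * upper_mdimM T F (\<lambda>x y. \<zeta> (dist x y))
         \<and> lower_mdimM T F (dist :: 'a \<Rightarrow> 'a \<Rightarrow> real)
           = ereal k * lower_mdimM T F (\<lambda>x y. \<zeta> (dist x y))"
proof -
  note cont = assms(2) and cpt = assms(3)
  define \<rho> where "\<rho> = diameter (UNIV :: 'a set)"
  have bnd: "bounded (UNIV :: 'a set)" using cpt by (rule compact_imp_bounded)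
  have dle: "dist a b \<le> \<rho>" for a b :: 'a
    unfolding \<rho>_def using bnd by (rule diameter_bounded_bound) auto
  have rho0: "0 \<le> \<rho>" using dle[of undefined undefined] by simp
  have Ffin: "finite (F n)" and Fne: "F n \<noteq> {}" for n
    using assms(5) unfolding folner_seq_def by auto
  have cA: "class_A \<rho> \<zeta>" using assms(6) unfolding \<rho>_def .
  have zcont: "continuous_on {0..\<rho>} \<zeta>" and zmono: "mono_on {0..\<rho>} \<zeta>"
    and znn: "\<And>t. t \<in> {0..\<rho>} \<Longrightarrow> \<zeta> t \<ge> 0" and zzero: "{t\<in>{0..\<rho>}. \<zeta> t = 0} = {0}"
    using cA unfolding class_A_def by auto
  have z0: "\<zeta> 0 = 0" using zzero rho0 by auto
  define zd where "zd = (\<lambda>x y::'a. \<zeta> (dist x y))"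
  define g where "g = (\<lambda>r e. limsup (\<lambda>n. ereal (ln (real (sep_num T r (F n) e)) / real (card (F n)))))"
  define Q where "Q = (\<lambda>r e. g r e * ereal (1 / \<bar>ln e\<bar>))"
  have UD: "upper_mdimM T F r = Limsup (at_right 0) (Q r)" for r :: "'a \<Rightarrow> 'a \<Rightarrow> real"
    unfolding upper_mdimM_def Q_def g_def ..
  have LD: "lower_mdimM T F r = Liminf (at_right 0) (Q r)" for r :: "'a \<Rightarrow> 'a \<Rightarrow> real"
    unfolding lower_mdimM_def Q_def g_def ..
  have gnn: "g r e \<ge> 0" for r e unfolding g_def by (rule limsup_ln_nonneg)
  have Qnn: "Q r e \<ge> 0" for r e unfolding Q_def using gnn by simp
  have gmono: "g r1 e1 \<le> g r2 e2" if "\<And>n. sep_num T r1 (F n) e1 \<le> sep_num T r2 (F n) e2" for r1 r2 e1 e2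
    unfolding g_def by (rule limsup_ln_mono) (rule that)
  show ?thesis
  proof (cases "\<rho> = 0")
    case True
    have dz: "dist a b = 0" for a b :: 'a using dle[of a b] True by simp
    have Q0: "Q r e = 0" if "e > 0" "\<And>a b. r a b = 0" for r :: "'a \<Rightarrow> 'a \<Rightarrow> real" and e
    proof -
      have "sep_num T r (F n) e \<le> 1" for n
        by (rule sep_num_le1[OF Ffin Fne]) (use that in simp)
      then have "ln (real (sep_num T r (F n) e)) = 0" for n
        by (metis le_eq_less_or_eq less_one ln_one of_nat_0 ln_0 of_nat_1)
      then have "g r e = limsup (\<lambda>n. 0::ereal)" unfolding g_def by (simp add: zero_ereal_def)
      then have "g r e = 0" using Limsup_const[OF trivial_limit_sequentially, of "0::ereal"] by simp
      then show ?thesis unfolding Q_def by simp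
    qed
    have ev: "eventually (\<lambda>e. Q r e = 0) (at_right 0)" if "\<And>a b. r a b = 0" for r :: "'a \<Rightarrow> 'a \<Rightarrow> real"
      using Q0[OF _ that] eventually_at_right_field[of _ "0::real"] by (auto intro!: exI[of _ 1])
    have evd: "eventually (\<lambda>e. Q dist e = 0) (at_right 0)" by (rule ev) (simp add: dz)
    have evz: "eventually (\<lambda>e. Q zd e = 0) (at_right 0)" by (rule ev) (simp add: zd_def dz z0)
    have "Limsup (at_right 0) (Q dist) = 0" "Liminf (at_right 0) (Q dist) = 0"
      "Limsup (at_right 0) (Q zd) = 0" "Liminf (at_right 0) (Q zd) = 0"
      using Limsup_eq[OF evd] Liminf_eq[OF evd] Limsup_eq[OF evz] Liminf_eq[OF evz]
        Limsup_const[of "at_right (0::real)" "0::ereal"]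
        Liminf_const[of "at_right (0::real)" "0::ereal"] by simp_all
    then show ?thesis unfolding UD LD zd_def by simp
  next
    case False
    then have rpos: "\<rho> > 0" using rho0 by simp
    have zpos: "\<zeta> t > 0" if "0 < t" "t \<le> \<rho>" for t
    proof -
      have "\<zeta> t \<ge> 0" using znn that by simp
      moreover have "\<zeta> t \<noteq> 0"
      proof
        assume "\<zeta> t = 0"
        then have "t \<in> {t\<in>{0..\<rho>}. \<zeta> t = 0}" using that by simp
        then have "t \<in> {0}" by (rule subsetD[OF equalityD1[OF zzero]])
        then show False using that by simp
      qed
      ultimately show ?thesis by simp
    qed
    have zmonoD: "\<zeta> s \<le> \<zeta> t" if "0 \<le> s" "s \<le> t" "t \<le> \<rho>" for s t
      using mono_onD[OF zmono, of s t] that by simp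
    have zlim: "(\<zeta> \<longlongrightarrow> 0) (at_right 0)"
    proof -
      have "(\<zeta> \<longlongrightarrow> \<zeta> 0) (at 0 within {0..\<rho>})"
        using zcont rho0 unfolding continuous_on_def by simp
      then show ?thesis using at_within_Icc_at_right[OF rpos] z0 by simp
    qed
    have klim: "((\<lambda>t. ln (\<zeta> t) / ln t) \<longlongrightarrow> k) (at_right 0)"
    proof -
      have "((\<lambda>t. ereal (ln (\<zeta> t) / ln t)) \<longlongrightarrow> ereal k) (at_right 0)"
        by (rule Liminf_eq_Limsup) (use assms(7,8) in \<open>auto simp: k_m_def k_M_def\<close>)
      then show ?thesis by simp
    qed
    have ev_small: "eventually (\<lambda>t. 0 < t \<and> t < min \<rho> 1 \<and> \<zeta> t < 1) (at_right 0)"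
    proof -
      have "eventually (\<lambda>t. 0 < t \<and> t < min \<rho> 1) (at_right (0::real))"
        unfolding eventually_at_right_field using rpos by (intro exI[of _ "min \<rho> 1"]) auto
      moreover have "eventually (\<lambda>t. \<zeta> t < 1) (at_right 0)"
        using zlim by (rule order_tendstoD(2)) simp
      ultimately show ?thesis by eventually_elim simp
    qed
    have sepd_bdd: "bdd_above (sepset T dist (F n) t)" if "t > 0" for n t
      by (rule sepset_dist_bdd[OF cpt cont Ffin Fne that])
    have sepz_bdd: "bdd_above (sepset T zd (F n) c)" if "c > 0" for n c
    proof -
      have "eventually (\<lambda>s. \<zeta> s < c) (at_right 0)"
        using zlim that by (rule order_tendstoD(2))
      then obtain b0 where b0: "b0 > 0" "\<And>s. 0 < s \<Longrightarrow> s < b0 \<Longrightarrow> \<zeta> s < c"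
        unfolding eventually_at_right_field by auto
      have imp: "dist a b > b0/2" if "zd a b > c" for a b
      proof (rule ccontr)
        assume "\<not> dist a b > b0/2"
        then have "dist a b < b0" using b0(1) by simp
        then have "\<zeta> (dist a b) \<le> c"
          using b0(2)[of "dist a b"] z0 \<open>c > 0\<close> by (cases "dist a b = 0") auto
        then show False using that unfolding zd_def by simp
      qed
      have "sepset T zd (F n) c \<subseteq> sepset T dist (F n) (b0/2)"
        by (rule sepset_mono[OF Ffin Fne imp])
      then show ?thesis using sepd_bdd[of "b0/2" n] b0(1) by (simp add: bdd_above_mono)
    qed
    have I1: "g dist t \<le> g zd (\<zeta> t / 2)" if "0 < t" "t \<le> \<rho>" for t
    proof (rule gmono)
      fix n
      have zt: "\<zeta> t > 0" using zpos that by simp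
      show "sep_num T dist (F n) t \<le> sep_num T zd (F n) (\<zeta> t / 2)"
      proof (rule sep_num_le[OF Ffin Fne])
        fix a b :: 'a assume "dist a b > t"
        then have "\<zeta> t \<le> \<zeta> (dist a b)" using zmonoD[of t "dist a b"] that dle[of a b] by simp
        then show "zd a b > \<zeta> t / 2" unfolding zd_def using zt by simp
      next
        show "bdd_above (sepset T zd (F n) (\<zeta> t / 2))" using sepz_bdd zt by simp
      qed
    qed
    have I2: "g zd (\<zeta> t) \<le> g dist t" if "0 < t" "t \<le> \<rho>" for t
    proof (rule gmono)
      fix n
      show "sep_num T zd (F n) (\<zeta> t) \<le> sep_num T dist (F n) t"
      proof (rule sep_num_le[OF Ffin Fne])
        fix a b :: 'a assume a: "zd a b > \<zeta> t"
        show "dist a b > t"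
        proof (rule ccontr)
          assume "\<not> dist a b > t"
          then have "\<zeta> (dist a b) \<le> \<zeta> t" using zmonoD[of "dist a b" t] that by simp
          then show False using a unfolding zd_def by simp
        qed
      next
        show "bdd_above (sepset T dist (F n) t)" using sepd_bdd that by simp
      qed
    qed
    have zrho: "\<zeta> \<rho> > 0" using zpos rpos by simp
    have tex: "\<exists>t. 0 < t \<and> t \<le> \<rho> \<and> \<zeta> t = e" if ee: "0 < e" "e < \<zeta> \<rho>" for e
    proof -
      obtain x where x: "0 \<le> x" "x \<le> \<rho>" "\<zeta> x = e"
        using IVT'[of \<zeta> 0 e \<rho>] z0 ee rho0 zcont by auto
      then have "x \<noteq> 0" using z0 ee by auto
      then show ?thesis using x by (intro exI[of _ x]) auto
    qed
    define \<tau> where "\<tau> = (\<lambda>e. SOME t. 0 < t \<and> t \<le> \<rho> \<and> \<zeta> t = e)"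
    have tau: "0 < \<tau> e \<and> \<tau> e \<le> \<rho> \<and> \<zeta> (\<tau> e) = e" if "0 < e" "e < \<zeta> \<rho>" for e
      unfolding \<tau>_def by (rule someI_ex) (rule tex[OF that])
    have tau_ev: "eventually (\<lambda>e. 0 < e \<and> e < \<zeta> \<rho>) (at_right 0)"
      unfolding eventually_at_right_field using zrho by (intro exI[of _ "\<zeta> \<rho>"]) auto
    have tau_lim: "filterlim \<tau> (at_right 0) (at_right 0)"
    proof (rule to_at_right)
      show "eventually (\<lambda>e. \<tau> e > 0) (at_right 0)"
        using tau_ev by eventually_elim (use tau in simp)
      show "(\<tau> \<longlongrightarrow> 0) (at_right 0)"
      proof (rule order_tendstoI)
        fix a :: real assume "a < 0"
        show "eventually (\<lambda>e. a < \<tau> e) (at_right 0)"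
          using tau_ev by eventually_elim (use tau \<open>a < 0\<close> in force)
      next
        fix a :: real assume a: "0 < a"
        define m where "m = min a \<rho>"
        have m: "0 < m" "m \<le> \<rho>" "m \<le> a" unfolding m_def using a rpos by auto
        have zm: "\<zeta> m > 0" using zpos m by simp
        have "eventually (\<lambda>e. 0 < e \<and> e < \<zeta> m) (at_right 0)"
          unfolding eventually_at_right_field using zm by (intro exI[of _ "\<zeta> m"]) auto
        then show "eventually (\<lambda>e. \<tau> e < a) (at_right 0)"
          using tau_ev
        proof eventually_elim
          case (elim e)
          have te: "0 < \<tau> e" "\<tau> e \<le> \<rho>" "\<zeta> (\<tau> e) = e" using tau elim(2) by auto
          show "\<tau> e < a"
          proof (rule ccontr)
            assume "\<not> \<tau> e < a"
            then have "\<zeta> m \<le> \<zeta> (\<tau> e)" using zmonoD[of m "\<tau> e"] m te by simp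
            then show False using te elim(1) by simp
          qed
        qed
      qed
    qed
    have lninf: "filterlim ln at_infinity (at_right (0::real))"
      using filterlim_mono[OF ln_at_0 at_bot_le_at_infinity order_refl] .
    have zpos_ev: "eventually (\<lambda>t. \<zeta> t > 0) (at_right 0)"
      using ev_small by eventually_elim (use zpos in simp)
    have phi1: "filterlim (\<lambda>t. \<zeta> t / 2) (at_right 0) (at_right 0)"
    proof (rule to_at_right)
      show "((\<lambda>t. \<zeta> t / 2) \<longlongrightarrow> 0) (at_right 0)"
        using tendsto_divide[OF zlim tendsto_const[of "2::real"]] by simp
      show "eventually (\<lambda>t. \<zeta> t / 2 > 0) (at_right 0)"
        using zpos_ev by eventually_elim simp
    qed
    have two: "filterlim (\<lambda>e::real. 2 * e) (at_right 0) (at_right 0)"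
    proof (rule to_at_right)
      show "((\<lambda>e::real. 2 * e) \<longlongrightarrow> 0) (at_right 0)"
        using tendsto_mult[OF tendsto_const[of "2::real"] tendsto_ident_at[of 0 "{0<..}"]] by simp
      show "eventually (\<lambda>e::real. 2 * e > 0) (at_right 0)"
        unfolding eventually_at_right_field by (intro exI[of _ 1]) auto
    qed
    have psi1: "filterlim (\<lambda>e. \<tau> (2 * e)) (at_right 0) (at_right 0)"
      using filterlim_compose[OF tau_lim two] .
    have inv1: "eventually (\<lambda>e. \<zeta> (\<tau> (2 * e)) / 2 = e) (at_right 0)"
    proof -
      have "eventually (\<lambda>e. 0 < e \<and> e < \<zeta> \<rho> / 2) (at_right 0)"
        unfolding eventually_at_right_field using zrho by (intro exI[of _ "\<zeta> \<rho> / 2"]) auto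
      then show ?thesis by eventually_elim (use tau in simp)
    qed
    have a1: "((\<lambda>t. ln (\<zeta> t / 2) / ln t) \<longlongrightarrow> k) (at_right 0)"
    proof -
      have "((\<lambda>t. ln (\<zeta> t) / ln t - ln 2 / ln t) \<longlongrightarrow> k - 0) (at_right 0)"
        by (intro tendsto_diff klim tendsto_divide_0[OF tendsto_const lninf])
      moreover have "eventually (\<lambda>t. ln (\<zeta> t) / ln t - ln 2 / ln t = ln (\<zeta> t / 2) / ln t) (at_right 0)"
        using zpos_ev by eventually_elim (simp add: ln_div diff_divide_distrib)
      ultimately show ?thesis using Lim_transform_eventually by fastforce
    qed
    have ineq1: "eventually (\<lambda>t. Q dist t \<le> Q zd (\<zeta> t / 2) * ereal (ln (\<zeta> t / 2) / ln t)) (at_right 0)"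
      using ev_small
    proof eventually_elim
      case (elim t)
      define s where "s = \<zeta> t / 2"
      have zt: "\<zeta> t > 0" using zpos elim by simp
      have s: "0 < s" "s < 1" unfolding s_def using zt elim by auto
      have lns: "ln s < 0" using s by simp
      have lnt: "ln t < 0" using elim by simp
      have eq: "1 / \<bar>ln t\<bar> = (1 / \<bar>ln s\<bar>) * (ln s / ln t)"
        using lns lnt by (simp add: field_simps)
      have "Q dist t = g dist t * ereal (1 / \<bar>ln t\<bar>)" unfolding Q_def ..
      also have "\<dots> \<le> g zd s * ereal (1 / \<bar>ln t\<bar>)"
        using I1[of t] elim unfolding s_def by (intro ereal_mult_right_mono) auto
      also have "\<dots> = g zd s * ereal (1 / \<bar>ln s\<bar>) * ereal (ln s / ln t)"
        unfolding eq by (simp add: mult.assoc)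
      also have "\<dots> = Q zd s * ereal (ln s / ln t)" unfolding Q_def ..
      finally show ?case unfolding s_def .
    qed
    have R1: "Limsup (at_right 0) (Q dist) \<le> Limsup (at_right 0) (Q zd) * ereal k
       \<and> Liminf (at_right 0) (Q dist) \<le> Liminf (at_right 0) (Q zd) * ereal k"
    proof
      show "Limsup (at_right 0) (Q dist) \<le> Limsup (at_right 0) (Q zd) * ereal k"
        by (rule transfer_LS[OF assms(9) phi1 a1 Qnn[of zd] ineq1])
      have b1: "((\<lambda>e. ln (\<zeta> (\<tau> (2 * e)) / 2) / ln (\<tau> (2 * e))) \<longlongrightarrow> k) (at_right 0)"
        using filterlim_compose[OF a1 psi1] .
      have "eventually (\<lambda>e. Q dist (\<tau> (2 * e))
          \<le> Q zd (\<zeta> (\<tau> (2 * e)) / 2) * ereal (ln (\<zeta> (\<tau> (2 * e)) / 2) / ln (\<tau> (2 * e)))) (at_right 0)"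
        using ineq1 psi1 unfolding filterlim_iff by blast
      then have "eventually (\<lambda>e. Q dist (\<tau> (2 * e))
          \<le> Q zd e * ereal (ln (\<zeta> (\<tau> (2 * e)) / 2) / ln (\<tau> (2 * e)))) (at_right 0)"
        using inv1 by eventually_elim simp
      then show "Liminf (at_right 0) (Q dist) \<le> Liminf (at_right 0) (Q zd) * ereal k"
        by (rule transfer_LI[OF assms(9) psi1 b1 Qnn[of zd]])
    qed
    have phi2: "filterlim \<zeta> (at_right 0) (at_right 0)"
      by (rule to_at_right[OF zlim zpos_ev])
    have inv2: "eventually (\<lambda>e. \<zeta> (\<tau> e) = e) (at_right 0)"
      using tau_ev by eventually_elim (use tau in simp)
    have a2: "((\<lambda>t. ln t / ln (\<zeta> t)) \<longlongrightarrow> 1 / k) (at_right 0)"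
    proof -
      have "((\<lambda>t. inverse (ln (\<zeta> t) / ln t)) \<longlongrightarrow> inverse k) (at_right 0)"
        using tendsto_inverse[OF klim] assms(9) by simp
      then show ?thesis by (simp add: inverse_divide divide_inverse mult.commute)
    qed
    have ineq2: "eventually (\<lambda>t. Q zd (\<zeta> t) \<le> Q dist t * ereal (ln t / ln (\<zeta> t))) (at_right 0)"
      using ev_small
    proof eventually_elim
      case (elim t)
      have zt: "\<zeta> t > 0" using zpos elim by simp
      have lns: "ln (\<zeta> t) < 0" using zt elim by simp
      have lnt: "ln t < 0" using elim by simp
      have eq: "1 / \<bar>ln (\<zeta> t)\<bar> = (1 / \<bar>ln t\<bar>) * (ln t / ln (\<zeta> t))"
        using lns lnt by (simp add: field_simps)
      have "Q zd (\<zeta> t) = g zd (\<zeta> t) * ereal (1 / \<bar>ln (\<zeta> t)\<bar>)" unfolding Q_def ..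
      also have "\<dots> \<le> g dist t * ereal (1 / \<bar>ln (\<zeta> t)\<bar>)"
        using I2[of t] elim by (intro ereal_mult_right_mono) auto
      also have "\<dots> = g dist t * ereal (1 / \<bar>ln t\<bar>) * ereal (ln t / ln (\<zeta> t))"
        unfolding eq by (simp add: mult.assoc)
      also have "\<dots> = Q dist t * ereal (ln t / ln (\<zeta> t))" unfolding Q_def ..
      finally show ?case .
    qed
    have kinv: "1 / k > 0" using assms(9) by simp
    have R2: "Limsup (at_right 0) (Q zd) \<le> Limsup (at_right 0) (Q dist) * ereal (1 / k)
       \<and> Liminf (at_right 0) (Q zd) \<le> Liminf (at_right 0) (Q dist) * ereal (1 / k)"
    proof
      show "Liminf (at_right 0) (Q zd) \<le> Liminf (at_right 0) (Q dist) * ereal (1 / k)"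
        by (rule transfer_LI[OF kinv phi2 a2 Qnn[of dist] ineq2])
      have b2: "((\<lambda>e. ln (\<tau> e) / ln (\<zeta> (\<tau> e))) \<longlongrightarrow> 1 / k) (at_right 0)"
        using filterlim_compose[OF a2 tau_lim] .
      have "eventually (\<lambda>e. Q zd (\<zeta> (\<tau> e)) \<le> Q dist (\<tau> e) * ereal (ln (\<tau> e) / ln (\<zeta> (\<tau> e)))) (at_right 0)"
        using ineq2 tau_lim unfolding filterlim_iff by blast
      then have "eventually (\<lambda>e. Q zd e \<le> Q dist (\<tau> e) * ereal (ln (\<tau> e) / ln (\<zeta> (\<tau> e)))) (at_right 0)"
        using inv2 by eventually_elim simp
      then show "Limsup (at_right 0) (Q zd) \<le> Limsup (at_right 0) (Q dist) * ereal (1 / k)"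
        by (rule transfer_LS[OF kinv tau_lim b2 Qnn[of dist]])
    qed
    have fin: "X = ereal k * Y" if "X \<le> Y * ereal k" "Y \<le> X * ereal (1 / k)" for X Y
    proof (rule antisym)
      show "X \<le> ereal k * Y" using that(1) by (simp add: mult.commute)
      have "ereal k * Y \<le> ereal k * (X * ereal (1 / k))"
        using that(2) assms(9) by (intro ereal_mult_left_mono) auto
      also have "\<dots> = X" by (rule ereal_cancel_k[OF assms(9)])
      finally show "ereal k * Y \<le> X" .
    qed
    show ?thesis unfolding UD LD zd_def[symmetric]
      using fin R1 R2 by blast
  qed
qed

end
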